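(* Let $G$ be the corresponding graph of an array $A$ with reach one and let $F$ be a resulting DFS forest of $G$. Let $H=F$ if all components of $F$ are directed paths; otherwise let $H$ be the graph obtained by merging the sub-trees of $F$. Let $H_1$ and $H_2$ be two distinct components of $H$, and apply the component merge to $H_1$ and $H_2$. Then the resulting graph contains a directed Hamiltonian path of the merged component, i.e. a directed path visiting every vertex of $V(H_1)\cup V(H_2)$ exactly once.
   Context: An array is a finite sequence $A=(A[1],\dots,A[n])$ of pairwise distinct real numbers. The corresponding graph of $A$ with reach one is the directed graph on $\{1,\dots,n\}$ with an arc $(i,j)$ whenever $j\equiv i\pm1\pmod n$, $j\ne i$, and $A[i]<A[j]$. DFS is run with adjacency lists sorted in increasing $A$-value and a visiting list containing all vertices; the resulting DFS forest consists of the arcs $(\mathrm{parent}(w),w)$ along which DFS discovers vertices; components are components of the underlying undirected graph, each a rooted tree. Merging the sub-trees of $F$: for each component of $F$ whose root has exactly two children $a_1,b_1$, set $p=a_1$, $q=b_1$ and, while both are defined: if $A[p]<A[q]$ add the arc $(p,q)$ and replace $p$ by its smallest-valued child in $F$ (undefined if none); otherwise add the arc $(q,p)$ and replace $q$ by its smallest-valued child in $F$ (undefined if none). Component merge of two distinct components $C,D$: set $p,q$ to the minimum-valued vertices of $C,D$; while both are defined: if $A[p]<A[q]$ add the arc $(p,q)$ and replace $p$ by the smallest-valued out-neighbour of $p$ within $C$ (ignoring arcs added during this merge; undefined if none); otherwise add $(q,p)$ and replace $q$ analogously within $D$. *)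

theory Defs
  imports Complex_Main "HOL-Library.While_Combinator"
begin

text \<open>An array of length n is a function A on the index set {1..n}, injective there
  (pairwise distinct real values). Arcs are pairs (i,j).\<close>

definition reach_one_graph :: "nat \<Rightarrow> (nat \<Rightarrow> real) \<Rightarrow> (nat \<times> nat) set" where
  "reach_one_graph n A =
     {(i, j). i \<in> {1..n} \<and> j \<in> {1..n} \<and> j \<noteq> i \<and>
              (j mod n = (i + 1) mod n \<or> (j + 1) mod n = i mod n) \<and> A i < A j}"

definition min_by :: "(nat \<Rightarrow> real) \<Rightarrow> nat set \<Rightarrow> nat option" where
  "min_by A S = (if S = {} then None else Some (arg_min A (\<lambda>x. x \<in> S)))"

text \<open>Scanning an adjacency list sorted by increasing A-value and skipping visited vertices
  is the same as always descending to the smallest-valued unvisited out-neighbour.\<close>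

type_synonym dfs_state = "nat set \<times> nat list \<times> nat list \<times> (nat \<times> nat) set"

definition dfs_step :: "(nat \<Rightarrow> real) \<Rightarrow> (nat \<times> nat) set \<Rightarrow> dfs_state \<Rightarrow> dfs_state" where
  "dfs_step A G s = (case s of (vis, st, todo, T) \<Rightarrow>
     (case st of
        v # rest \<Rightarrow>
          (let U = {w. (v, w) \<in> G \<and> w \<notin> vis} in
           if U = {} then (vis, rest, todo, T)
           else (let w = arg_min A (\<lambda>x. x \<in> U) in
                 (insert w vis, w # st, todo, insert (v, w) T)))
      | [] \<Rightarrow>
          (case todo of
             [] \<Rightarrow> (vis, [], [], T)
           | u # us \<Rightarrow> if u \<in> vis then (vis, [], us, T)
                       else (insert u vis, [u], us, T))))"

definition dfs_forest :: "(nat \<Rightarrow> real) \<Rightarrow> (nat \<times> nat) set \<Rightarrow> nat list \<Rightarrow> (nat \<times> nat) set" where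
  "dfs_forest A G vl =
     (case while_option (\<lambda>(vis, st, todo, T). st \<noteq> [] \<or> todo \<noteq> [])
                        (dfs_step A G) ({}, [], vl, {}) of
        Some (vis, st, todo, T) \<Rightarrow> T
      | None \<Rightarrow> {})"

definition component_of :: "nat set \<Rightarrow> (nat \<times> nat) set \<Rightarrow> nat \<Rightarrow> nat set" where
  "component_of V E v = {u \<in> V. (v, u) \<in> (E \<union> E\<inverse>)\<^sup>*}"

definition components :: "nat set \<Rightarrow> (nat \<times> nat) set \<Rightarrow> nat set set" where
  "components V E = component_of V E ` V"

definition is_root :: "nat set \<Rightarrow> (nat \<times> nat) set \<Rightarrow> nat \<Rightarrow> bool" where
  "is_root V F r \<longleftrightarrow> r \<in> V \<and> (\<forall>u. (u, r) \<notin> F)"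

definition children :: "(nat \<times> nat) set \<Rightarrow> nat \<Rightarrow> nat set" where
  "children F v = {w. (v, w) \<in> F}"

definition is_directed_path_comp :: "(nat \<times> nat) set \<Rightarrow> nat set \<Rightarrow> bool" where
  "is_directed_path_comp F C \<longleftrightarrow>
     (\<exists>xs. distinct xs \<and> set xs = C \<and>
           {(u, v) \<in> F. u \<in> C \<and> v \<in> C} = set (zip xs (tl xs)))"

definition merge_step ::
  "(nat \<Rightarrow> real) \<Rightarrow> (nat \<Rightarrow> nat option) \<Rightarrow> (nat \<Rightarrow> nat option) \<Rightarrow>
   nat option \<times> nat option \<times> (nat \<times> nat) set \<Rightarrow> nat option \<times> nat option \<times> (nat \<times> nat) set" where
  "merge_step A nxp nxq s = (case s of
     (Some p, Some q, E) \<Rightarrow>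
        if A p < A q then (nxp p, Some q, insert (p, q) E)
        else (Some p, nxq q, insert (q, p) E)
   | _ \<Rightarrow> s)"

definition merge_arcs ::
  "(nat \<Rightarrow> real) \<Rightarrow> (nat \<Rightarrow> nat option) \<Rightarrow> (nat \<Rightarrow> nat option) \<Rightarrow> nat \<Rightarrow> nat \<Rightarrow> (nat \<times> nat) set" where
  "merge_arcs A nxp nxq p0 q0 =
     (case while_option (\<lambda>(p, q, E). p \<noteq> None \<and> q \<noteq> None)
                        (merge_step A nxp nxq) (Some p0, Some q0, {}) of
        Some (p, q, E) \<Rightarrow> E
      | None \<Rightarrow> {})"

definition merge_subtrees :: "nat set \<Rightarrow> (nat \<Rightarrow> real) \<Rightarrow> (nat \<times> nat) set \<Rightarrow> (nat \<times> nat) set" where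
  "merge_subtrees V A F =
     F \<union> \<Union> {merge_arcs A (\<lambda>v. min_by A (children F v)) (\<lambda>v. min_by A (children F v)) a b
           | r a b. is_root V F r \<and> children F r = {a, b} \<and> a \<noteq> b}"

definition graph_H :: "nat set \<Rightarrow> (nat \<Rightarrow> real) \<Rightarrow> (nat \<times> nat) set \<Rightarrow> (nat \<times> nat) set" where
  "graph_H V A F =
     (if \<forall>C \<in> components V F. is_directed_path_comp F C then F
      else merge_subtrees V A F)"

text \<open>Component merge of C and D in graph H: start at the minimum-valued vertices,
  advance by the smallest-valued out-neighbour within the respective component in H
  (arcs added during this merge are ignored).\<close>

definition component_merge ::
  "(nat \<Rightarrow> real) \<Rightarrow> (nat \<times> nat) set \<Rightarrow> nat set \<Rightarrow> nat set \<Rightarrow> (nat \<times> nat) set" where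
  "component_merge A H C D =
     H \<union> merge_arcs A
           (\<lambda>v. min_by A {w \<in> C. (v, w) \<in> H})
           (\<lambda>v. min_by A {w \<in> D. (v, w) \<in> H})
           (arg_min A (\<lambda>x. x \<in> C)) (arg_min A (\<lambda>x. x \<in> D))"

definition has_ham_path :: "(nat \<times> nat) set \<Rightarrow> nat set \<Rightarrow> bool" where
  "has_ham_path R S \<longleftrightarrow>
     (\<exists>xs. distinct xs \<and> set xs = S \<and> set (zip xs (tl xs)) \<subseteq> R)"

end

theory Submission
  imports Defs
begin

definition consec :: "(nat \<Rightarrow> real) \<Rightarrow> nat set \<Rightarrow> nat \<Rightarrow> nat \<Rightarrow> bool" where
  "consec A S x y \<longleftrightarrow> x \<in> S \<and> y \<in> S \<and> A x < A y \<and> (\<forall>z\<in>S. \<not> (A x < A z \<and> A z < A y))"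

definition good :: "(nat \<Rightarrow> real) \<Rightarrow> (nat \<times> nat) set \<Rightarrow> nat set \<Rightarrow> bool" where
  "good A R S \<longleftrightarrow> (\<forall>x y. consec A S x y \<longrightarrow> (x, y) \<in> R)"

definition nx_ok :: "(nat \<Rightarrow> real) \<Rightarrow> (nat \<Rightarrow> nat option) \<Rightarrow> nat set \<Rightarrow> bool" where
  "nx_ok A nx S \<longleftrightarrow> (\<forall>x\<in>S. (nx x = None \<longleftrightarrow> (\<forall>y\<in>S. A y \<le> A x)) \<and>
                          (\<forall>y. nx x = Some y \<longrightarrow> consec A S x y))"

definition incarcs :: "(nat \<Rightarrow> real) \<Rightarrow> nat set \<Rightarrow> (nat \<times> nat) set" where
  "incarcs A S = {(x, y). x \<in> S \<and> y \<in> S \<and> A x < A y}"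

definition minv where
  "minv A P Q E0 p q E \<longleftrightarrow> p \<in> P \<and> q \<in> Q \<and> (\<forall>x\<in>P. A x < A p \<longrightarrow> A x < A q) \<and>
     (\<forall>x\<in>Q. A x < A q \<longrightarrow> A x < A p) \<and>
     (\<forall>x y. consec A (P \<union> Q) x y \<and> A x < A p \<and> A x < A q \<longrightarrow> (x, y) \<in> E0 \<union> E)"

lemma minv_sym: "minv A P Q E0 p q E \<Longrightarrow> minv A Q P E0 q p E"
  unfolding minv_def by (simp add: Un_commute)

lemma consec_sub: "consec A (P \<union> Q) x y \<Longrightarrow> x \<in> P \<Longrightarrow> y \<in> P \<Longrightarrow> consec A P x y"
  unfolding consec_def by auto

lemma step_adv:
  assumes disj: "P \<inter> Q = {}" and inj: "inj_on A (P \<union> Q)"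
    and nxp: "nx_ok A nxp P" and gP: "good A E0 P" and gQ: "good A E0 Q"
    and mi: "minv A P Q E0 p q E" and lt: "A p < A q"
  shows "case nxp p of None \<Rightarrow> good A (E0 \<union> insert (p, q) E) (P \<union> Q)
                     | Some p' \<Rightarrow> minv A P Q E0 p' q (insert (p, q) E)"
proof -
  have pP: "p \<in> P" and qQ: "q \<in> Q" and i1: "\<forall>x\<in>P. A x < A p \<longrightarrow> A x < A q"
    and i2: "\<forall>x\<in>Q. A x < A q \<longrightarrow> A x < A p"
    and i3: "\<forall>x y. consec A (P \<union> Q) x y \<and> A x < A p \<and> A x < A q \<longrightarrow> (x, y) \<in> E0 \<union> E"
    using mi unfolding minv_def by auto
  have eqv: "\<And>x y. x \<in> P \<union> Q \<Longrightarrow> y \<in> P \<union> Q \<Longrightarrow> A x = A y \<Longrightarrow> x = y"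
    using inj by (meson inj_onD)
  have yq: "y = q" if "consec A (P \<union> Q) p y" "y \<in> Q" for y
  proof -
    have "A p < A y" using that unfolding consec_def by auto
    moreover have "\<not> A y < A q" using i2 that(2) \<open>A p < A y\<close> by force
    moreover have "\<not> A q < A y" using that(1) qQ lt unfolding consec_def by auto
    ultimately have "A y = A q" by auto
    then show ?thesis using eqv that qQ by auto
  qed
  show ?thesis
  proof (cases "nxp p")
    case None
    then have pmax: "\<forall>y\<in>P. A y \<le> A p" using nxp pP unfolding nx_ok_def by auto
    have "good A (E0 \<union> insert (p, q) E) (P \<union> Q)"
      unfolding good_def
    proof (intro allI impI)
      fix x y assume c: "consec A (P \<union> Q) x y"
      then have xS: "x \<in> P \<union> Q" and yS: "y \<in> P \<union> Q" and xy: "A x < A y"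
        unfolding consec_def by auto
      show "(x, y) \<in> E0 \<union> insert (p, q) E"
      proof (cases "A x < A p")
        case True
        then show ?thesis using i3 c lt by auto
      next
        case False
        show ?thesis
        proof (cases "x = p")
          case True
          then have "y \<notin> P" using pmax xy by force
          then show ?thesis using yq c True yS by auto
        next
          case False
          then have "A p < A x" using \<open>\<not> A x < A p\<close> eqv xS pP by force
          then have xQ: "x \<in> Q" using pmax xS by force
          then have "\<not> A x < A q" using i2 \<open>A p < A x\<close> by force
          then have "y \<in> Q" using yS pmax xy lt by force
          then have "consec A Q x y" using consec_sub[of A Q P x y] c xQ by (simp add: Un_commute)
          then show ?thesis using gQ unfolding good_def by auto
        qed
      qed
    qed
    then show ?thesis using None by simp
  next
    case (Some p')
    then have cpp: "consec A P p p'" using nxp pP unfolding nx_ok_def by auto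
    then have p'P: "p' \<in> P" and pp': "A p < A p'" and nobt: "\<forall>z\<in>P. \<not> (A p < A z \<and> A z < A p')"
      unfolding consec_def by auto
    have j1: "\<forall>x\<in>P. A x < A p' \<longrightarrow> A x < A q"
    proof (intro ballI impI)
      fix x assume "x \<in> P" "A x < A p'"
      then show "A x < A q"
        using i1 nobt lt eqv pP by (metis UnI1 linorder_neqE_linordered_idom)
    qed
    have j2: "\<forall>x\<in>Q. A x < A q \<longrightarrow> A x < A p'" using i2 pp' by force
    have j3: "\<forall>x y. consec A (P \<union> Q) x y \<and> A x < A p' \<and> A x < A q \<longrightarrow> (x, y) \<in> E0 \<union> insert (p, q) E"
    proof (intro allI impI)
      fix x y assume h: "consec A (P \<union> Q) x y \<and> A x < A p' \<and> A x < A q"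
      then have c: "consec A (P \<union> Q) x y" and xS: "x \<in> P \<union> Q" and yS: "y \<in> P \<union> Q"
        and xy: "A x < A y" unfolding consec_def by auto
      show "(x, y) \<in> E0 \<union> insert (p, q) E"
      proof (cases "A x < A p")
        case True
        then show ?thesis using i3 c lt by auto
      next
        case False
        show ?thesis
        proof (cases "x = p")
          case True
          show ?thesis
          proof (cases "y \<in> P")
            case True
            then have "consec A P x y" using consec_sub c \<open>x = p\<close> pP by blast
            then show ?thesis using gP unfolding good_def by auto
          next
            case False
            then show ?thesis using yq c \<open>x = p\<close> yS by auto
          qed
        next
          case False
          then have "A p < A x" using \<open>\<not> A x < A p\<close> eqv xS pP by force
          then have False using xS nobt h i2 by force
          then show ?thesis ..
        qed
      qed
    qed
    show ?thesis using Some p'P qQ j1 j2 j3 unfolding minv_def by simp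
  qed
qed


definition Jinv where
  "Jinv A P Q E0 s = (case s of (po, qo, E) \<Rightarrow> E \<subseteq> incarcs A (P \<union> Q) \<and>
     (case po of Some p \<Rightarrow> (case qo of Some q \<Rightarrow> minv A P Q E0 p q E | None \<Rightarrow> good A (E0 \<union> E) (P \<union> Q))
        | None \<Rightarrow> good A (E0 \<union> E) (P \<union> Q)))"

definition pm :: "(nat \<Rightarrow> real) \<Rightarrow> nat set \<Rightarrow> nat option \<Rightarrow> nat set" where
  "pm A P po = (case po of None \<Rightarrow> {} | Some p \<Rightarrow> {x\<in>P. A p \<le> A x})"

lemma pm_dec:
  assumes "finite P" "nx_ok A nx P" "p \<in> P"
  shows "card (pm A P (nx p)) < card (pm A P (Some p))"
proof -
  have "pm A P (nx p) \<subset> pm A P (Some p)"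
  proof (cases "nx p")
    case None then show ?thesis using assms by (auto simp: pm_def)
  next
    case (Some p')
    then have "consec A P p p'" using assms unfolding nx_ok_def by auto
    then show ?thesis using Some assms(3) unfolding pm_def consec_def by force
  qed
  then show ?thesis using assms(1) by (intro psubset_card_mono) (auto simp: pm_def)
qed

lemma merge_main:
  assumes finP: "finite P" and finQ: "finite Q" and disj: "P \<inter> Q = {}" and inj: "inj_on A (P \<union> Q)"
    and p0: "p0 \<in> P" "\<forall>x\<in>P. A p0 \<le> A x" and q0: "q0 \<in> Q" "\<forall>x\<in>Q. A q0 \<le> A x"
    and nxp: "nx_ok A nxp P" and nxq: "nx_ok A nxq Q"
    and gP: "good A E0 P" and gQ: "good A E0 Q"
  shows "good A (E0 \<union> merge_arcs A nxp nxq p0 q0) (P \<union> Q) \<and>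
         merge_arcs A nxp nxq p0 q0 \<subseteq> incarcs A (P \<union> Q)"
proof -
  let ?b = "\<lambda>(p :: nat option, q :: nat option, E :: (nat \<times> nat) set). p \<noteq> None \<and> q \<noteq> None"
  let ?c = "merge_step A nxp nxq"
  let ?J = "Jinv A P Q E0"
  let ?f = "\<lambda>(po, qo, E :: (nat \<times> nat) set). card (pm A P po) + card (pm A Q qo)"
  have eqv: "\<And>x y. x \<in> P \<union> Q \<Longrightarrow> y \<in> P \<union> Q \<Longrightarrow> A x = A y \<Longrightarrow> x = y"
    using inj by (meson inj_onD)
  have stp: "?J (?c s) \<and> ?f (?c s) < ?f s" if J: "?J s" and B: "?b s" for s
  proof -
    obtain p q E where s: "s = (Some p, Some q, E)" using B
      by (cases s) auto
    have mi: "minv A P Q E0 p q E" and Es: "E \<subseteq> incarcs A (P \<union> Q)"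
      using J unfolding s Jinv_def by auto
    have pP: "p \<in> P" and qQ: "q \<in> Q" using mi unfolding minv_def by auto
    show ?thesis
    proof (cases "A p < A q")
      case True
      have cs: "?c s = (nxp p, Some q, insert (p, q) E)" using True by (simp add: s merge_step_def)
      have h: "case nxp p of None \<Rightarrow> good A (E0 \<union> insert (p, q) E) (P \<union> Q)
                     | Some p' \<Rightarrow> minv A P Q E0 p' q (insert (p, q) E)"
        by (rule step_adv[OF disj inj nxp gP gQ mi True])
      have "insert (p, q) E \<subseteq> incarcs A (P \<union> Q)" using Es True pP qQ by (auto simp: incarcs_def)
      then have "?J (?c s)" using h unfolding cs Jinv_def by (cases "nxp p") auto
      moreover have "?f (?c s) < ?f s" using pm_dec[OF finP nxp pP] unfolding cs by (simp add: s)
      ultimately show ?thesis by blast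
    next
      case False
      then have lt: "A q < A p" using eqv pP qQ disj by (metis UnI1 UnI2 disjoint_iff linorder_neqE_linordered_idom)
      have cs: "?c s = (Some p, nxq q, insert (q, p) E)" using False by (simp add: s merge_step_def)
      have h: "case nxq q of None \<Rightarrow> good A (E0 \<union> insert (q, p) E) (Q \<union> P)
                     | Some q' \<Rightarrow> minv A Q P E0 q' p (insert (q, p) E)"
        by (rule step_adv[OF _ _ nxq gQ gP minv_sym[OF mi] lt]) (use disj inj in \<open>auto simp: Un_commute\<close>)
      have "insert (q, p) E \<subseteq> incarcs A (P \<union> Q)" using Es lt pP qQ by (auto simp: incarcs_def)
      then have "?J (?c s)" using h minv_sym[of A Q P E0] unfolding cs Jinv_def
        by (cases "nxq q") (auto simp: Un_commute)
      moreover have "?f (?c s) < ?f s" using pm_dec[OF finQ nxq qQ] unfolding cs by (simp add: s)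
      ultimately show ?thesis by blast
    qed
  qed
  have init: "?J (Some p0, Some q0, {})"
    using p0 q0 unfolding Jinv_def minv_def consec_def incarcs_def by force
  obtain t where t: "while_option ?b ?c (Some p0, Some q0, {}) = Some t"
    using measure_while_option_Some[of ?J ?b ?c ?f, OF stp init] by blast
  have Jt: "?J t" using while_option_rule[where P = ?J, OF _ t init] stp by blast
  have nb: "\<not> ?b t" using while_option_stop[OF t] .
  obtain po qo E where tt: "t = (po, qo, E)" by (cases t)
  have me: "merge_arcs A nxp nxq p0 q0 = E" unfolding merge_arcs_def using t tt by simp
  show ?thesis using Jt nb unfolding me tt Jinv_def
    by (cases po; cases qo) auto
qed


lemma consec_ex:
  assumes "finite S" "x \<in> S" "y \<in> S" "A x < A y"
  shows "\<exists>y'. consec A S x y'"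
proof -
  let ?T = "{z\<in>S. A x < A z}"
  have ne: "?T \<noteq> {}" using assms by auto
  have fin: "finite ?T" using assms by auto
  let ?m = "arg_min_on A ?T"
  have "?m \<in> ?T" and "\<not>(\<exists>z\<in>?T. A z < A ?m)" using arg_min_if_finite[OF fin ne] by auto
  then have "consec A S x ?m" using assms unfolding consec_def by auto
  then show ?thesis by blast
qed

lemma min_by_empty: "min_by A {} = None" by (simp add: min_by_def)

lemma min_by_ne:
  assumes "finite S" "S \<noteq> {}"
  shows "\<exists>m. min_by A S = Some m \<and> m \<in> S \<and> (\<forall>z\<in>S. A m \<le> A z)"
  using arg_min_if_finite[OF assms, of A] assms unfolding min_by_def arg_min_on_def
  by (metis not_le_imp_less)

lemma nx_from_good:
  assumes fin: "finite C" and g: "good A R C" and inc: "\<forall>(x, y)\<in>R. x \<in> C \<longrightarrow> y \<in> C \<longrightarrow> A x < A y"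
  shows "nx_ok A (\<lambda>v. min_by A {w\<in>C. (v, w) \<in> R}) C"
  unfolding nx_ok_def
proof (intro ballI conjI allI impI)
  fix x assume xC: "x \<in> C"
  let ?O = "{w\<in>C. (x, w) \<in> R}"
  have finO: "finite ?O" using fin by auto
  show "(min_by A ?O = None) = (\<forall>y\<in>C. A y \<le> A x)"
  proof
    assume "min_by A ?O = None"
    then have O0: "?O = {}" using min_by_ne[OF finO, of A] by (metis option.distinct(1))
    show "\<forall>y\<in>C. A y \<le> A x"
    proof (rule ccontr)
      assume "\<not> (\<forall>y\<in>C. A y \<le> A x)"
      then obtain y where "y \<in> C" "A x < A y" by force
      then obtain y' where "consec A C x y'" using consec_ex[OF fin xC] by blast
      then have "y' \<in> ?O" using g unfolding good_def consec_def by auto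
      then show False using O0 by auto
    qed
  next
    assume mx: "\<forall>y\<in>C. A y \<le> A x"
    have "?O = {}"
    proof (rule ccontr)
      assume "?O \<noteq> {}"
      then obtain w where "w \<in> C" "(x, w) \<in> R" by auto
      then have "A x < A w" using inc xC by blast
      then show False using mx \<open>w \<in> C\<close> by force
    qed
    then show "min_by A ?O = None" by (simp add: min_by_def)
  qed
next
  fix x y assume xC: "x \<in> C" and my: "min_by A {w\<in>C. (x, w) \<in> R} = Some y"
  let ?O = "{w\<in>C. (x, w) \<in> R}"
  have finO: "finite ?O" using fin by auto
  have "?O \<noteq> {}" using my unfolding min_by_def by (metis option.distinct(1))
  then obtain m where m: "min_by A ?O = Some m" "m \<in> ?O" "\<forall>z\<in>?O. A m \<le> A z"
    using min_by_ne[OF finO] by blast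
  have ym: "y = m" using m(1) my by simp
  have xm: "A x < A m" using m(2) inc xC by blast
  obtain y' where cy: "consec A C x y'" using consec_ex[OF fin xC _ xm] m(2) by blast
  then have "y' \<in> ?O" using g unfolding good_def consec_def by auto
  then have "A m \<le> A y'" using m(3) by auto
  then show "consec A C x y" using cy m(2) xm ym xC unfolding consec_def by (smt (verit) mem_Collect_eq)
qed

lemma good_mono: "good A R S \<Longrightarrow> R \<subseteq> R' \<Longrightarrow> good A R' S"
  unfolding good_def by auto

lemma ham:
  assumes "finite S"
  shows "good A R S \<Longrightarrow> inj_on A S \<Longrightarrow>
    \<exists>xs. distinct xs \<and> set xs = S \<and> set (zip xs (tl xs)) \<subseteq> R \<and> (xs \<noteq> [] \<longrightarrow> (\<forall>y\<in>S. A (hd xs) \<le> A y))"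
  using assms
proof (induction S rule: finite_ranking_induct[where f = "\<lambda>x. - A x"])
  case empty
  then show ?case by auto
next
  case (insert x S)
  show ?case
  proof (cases "x \<in> S")
    case True
    then show ?thesis using insert by (simp add: insert_absorb)
  next
    case False
    have xmin: "\<forall>y\<in>S. A x \<le> A y" using insert(2) by force
    have gS: "good A R S" using insert(4) xmin unfolding good_def consec_def by force
    obtain xs where xs: "distinct xs" "set xs = S" "set (zip xs (tl xs)) \<subseteq> R"
      "xs \<noteq> [] \<longrightarrow> (\<forall>y\<in>S. A (hd xs) \<le> A y)"
      using insert(3)[OF gS] insert(5) by auto
    have R1: "set (zip (x # xs) (tl (x # xs))) \<subseteq> R"
    proof (cases xs)
      case Nil then show ?thesis by simp
    next
      case (Cons h t)
      have hS: "h \<in> S" using xs(2) Cons by auto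
      have "A x \<noteq> A h" using insert(5) False hS by (metis inj_on_contraD insertCI)
      then have "A x < A h" using xmin hS by force
      then have "consec A (insert x S) x h" using xs(4) Cons hS unfolding consec_def by fastforce
      then have "(x, h) \<in> R" using insert(4) unfolding good_def by auto
      then show ?thesis using xs(3) Cons by auto
    qed
    show ?thesis
      by (rule exI[of _ "x # xs"]) (use xs False R1 xmin in auto)
  qed
qed

definition Dd :: "(nat \<times> nat) set \<Rightarrow> nat \<Rightarrow> nat set" where
  "Dd F r = {y. (r, y) \<in> F\<^sup>*}"

definition nbF :: "(nat \<times> nat) set \<Rightarrow> nat \<Rightarrow> nat set" where
  "nbF F v = {w. (v, w) \<in> F \<or> (w, v) \<in> F}"

definition fok :: "nat set \<Rightarrow> (nat \<Rightarrow> real) \<Rightarrow> (nat \<times> nat) set \<Rightarrow> bool" where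
  "fok V A F \<longleftrightarrow> finite V \<and> inj_on A V \<and> F \<subseteq> V \<times> V \<and> (\<forall>(u, v)\<in>F. A u < A v) \<and>
     (\<forall>u u' v. (u, v) \<in> F \<longrightarrow> (u', v) \<in> F \<longrightarrow> u = u') \<and>
     (\<forall>v x y z. x \<in> nbF F v \<longrightarrow> y \<in> nbF F v \<longrightarrow> z \<in> nbF F v \<longrightarrow> x = y \<or> x = z \<or> y = z)"

lemma rt_le: fixes A :: "nat \<Rightarrow> real" assumes "\<forall>(u, v)\<in>F. A u < A v" "(x, y) \<in> F\<^sup>*" shows "A x \<le> A y"
  using assms(2)
proof (induction rule: rtrancl_induct)
  case (step y z)
  have "A y < A z" using assms(1) step(2) by blast
  then show ?case using step(3) by linarith
qed simp

lemma cmp: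
  assumes sv: "\<forall>y\<in>Dd F c. \<forall>z z'. (y, z) \<in> F \<longrightarrow> (y, z') \<in> F \<longrightarrow> z = z'"
    and cx: "(c, x) \<in> F\<^sup>*" and cy: "(c, y) \<in> F\<^sup>*"
  shows "(x, y) \<in> F\<^sup>* \<or> (y, x) \<in> F\<^sup>*"
  using cx
proof (induction rule: rtrancl_induct)
  case base
  then show ?case using cy by simp
next
  case (step x x')
  have xD: "x \<in> Dd F c" using step.hyps(1) by (simp add: Dd_def)
  from step.IH show ?case
  proof
    assume xy: "(x, y) \<in> F\<^sup>*"
    show ?case
    proof (cases "x = y")
      case True then show ?thesis using step.hyps(2) by auto
    next
      case False
      then obtain z where "(x, z) \<in> F" "(z, y) \<in> F\<^sup>*" using xy converse_rtranclE by metis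
      then have "z = x'" using sv xD step.hyps(2) by blast
      then show ?thesis using \<open>(z, y) \<in> F\<^sup>*\<close> by simp
    qed
  next
    assume "(y, x) \<in> F\<^sup>*"
    then show ?case using step.hyps(2) by (meson rtrancl.rtrancl_into_rtrancl)
  qed
qed

lemma bconf:
  assumes F2: "\<forall>u u' v. (u, v) \<in> F \<longrightarrow> (u', v) \<in> F \<longrightarrow> u = u'" and ax: "(a, x) \<in> F\<^sup>*"
  shows "(b, x) \<in> F\<^sup>* \<Longrightarrow> (a, b) \<in> F\<^sup>* \<or> (b, a) \<in> F\<^sup>*"
  using ax
proof (induction arbitrary: rule: rtrancl_induct)
  case base
  then show ?case by simp
next
  case (step x x')
  show ?case
  proof (cases "b = x'")
    case True then show ?thesis using step.hyps by auto
  next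
    case False
    then obtain w where "(b, w) \<in> F\<^sup>*" "(w, x') \<in> F" using step.prems by (metis rtranclE)
    then have "w = x" using F2 step.hyps(2) by blast
    then show ?thesis using step.IH \<open>(b, w) \<in> F\<^sup>*\<close> by simp
  qed
qed

lemma Dd_sub: assumes "F \<subseteq> V \<times> V" "r \<in> V" shows "Dd F r \<subseteq> V"
proof
  fix y assume "y \<in> Dd F r"
  then have "(r, y) \<in> F\<^sup>*" by (simp add: Dd_def)
  then show "y \<in> V" using assms by (induction rule: rtrancl_induct) auto
qed

lemma chain_lemma:
  assumes fk: "fok V A F" and cV: "c \<in> V"
    and sv: "\<forall>y\<in>Dd F c. \<forall>z z'. (y, z) \<in> F \<longrightarrow> (y, z') \<in> F \<longrightarrow> z = z'"
  shows "good A F (Dd F c) \<and> nx_ok A (\<lambda>v. min_by A (children F v)) (Dd F c) \<and> (\<forall>y\<in>Dd F c. A c \<le> A y)"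
proof -
  have finV: "finite V" and inj: "inj_on A V" and FV: "F \<subseteq> V \<times> V" and inc: "\<forall>(u, v)\<in>F. A u < A v"
    using fk unfolding fok_def by auto
  have DV: "Dd F c \<subseteq> V" using Dd_sub[OF FV cV] .
  have inD: "\<And>x. x \<in> Dd F c \<longleftrightarrow> (c, x) \<in> F\<^sup>*" by (simp add: Dd_def)
  have chD: "\<And>x z. x \<in> Dd F c \<Longrightarrow> (x, z) \<in> F \<Longrightarrow> z \<in> Dd F c"
    using inD by (meson rtrancl.rtrancl_into_rtrancl)
  have eqv: "\<And>x y. x \<in> V \<Longrightarrow> y \<in> V \<Longrightarrow> A x = A y \<Longrightarrow> x = y" using inj by (meson inj_onD)
  have up: "(x, y) \<in> F\<^sup>*" if "x \<in> Dd F c" "y \<in> Dd F c" "A x < A y" for x y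
  proof -
    have "(x, y) \<in> F\<^sup>* \<or> (y, x) \<in> F\<^sup>*" using cmp[OF sv] that inD by blast
    moreover have "(y, x) \<notin> F\<^sup>*" using rt_le[OF inc] that(3) by force
    ultimately show ?thesis by blast
  qed
  have step1: "\<exists>z. (x, z) \<in> F \<and> (z, y) \<in> F\<^sup>*" if "x \<in> Dd F c" "y \<in> Dd F c" "A x < A y" for x y
  proof -
    have "(x, y) \<in> F\<^sup>*" using up that by blast
    moreover have "x \<noteq> y" using that(3) by auto
    ultimately show ?thesis by (metis converse_rtranclE)
  qed
  have g: "good A F (Dd F c)"
    unfolding good_def
  proof (intro allI impI)
    fix x y assume cs: "consec A (Dd F c) x y"
    then have xD: "x \<in> Dd F c" and yD: "y \<in> Dd F c" and xy: "A x < A y"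
      and nb: "\<forall>z\<in>Dd F c. \<not> (A x < A z \<and> A z < A y)" unfolding consec_def by auto
    obtain z where z: "(x, z) \<in> F" "(z, y) \<in> F\<^sup>*" using step1[OF xD yD xy] by blast
    have zD: "z \<in> Dd F c" using chD[OF xD z(1)] .
    have "A x < A z" using inc z(1) by auto
    moreover have "A z \<le> A y" using rt_le[OF inc z(2)] .
    ultimately have "A z = A y" using nb zD by force
    then have "z = y" using eqv zD yD DV by blast
    then show "(x, y) \<in> F" using z(1) by simp
  qed
  have nx: "nx_ok A (\<lambda>v. min_by A (children F v)) (Dd F c)"
    unfolding nx_ok_def
  proof (intro ballI conjI allI impI)
    fix x assume xD: "x \<in> Dd F c"
    have finCh: "finite (children F x)"
    proof -
      have "children F x \<subseteq> V" using FV by (auto simp: children_def)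
      then show ?thesis using finV finite_subset by blast
    qed
    show "(min_by A (children F x) = None) = (\<forall>y\<in>Dd F c. A y \<le> A x)"
    proof
      assume "min_by A (children F x) = None"
      then have ch0: "children F x = {}" by (simp add: min_by_def split: if_splits)
      show "\<forall>y\<in>Dd F c. A y \<le> A x"
      proof (rule ccontr)
        assume "\<not> (\<forall>y\<in>Dd F c. A y \<le> A x)"
        then obtain y where "y \<in> Dd F c" "A x < A y" by force
        then obtain z where "(x, z) \<in> F" using step1[OF xD] by blast
        then show False using ch0 by (auto simp: children_def)
      qed
    next
      assume mx: "\<forall>y\<in>Dd F c. A y \<le> A x"
      have "children F x = {}"
      proof (rule ccontr)
        assume "children F x \<noteq> {}"
        then obtain z where z: "(x, z) \<in> F" by (auto simp: children_def)
        then have "A x < A z" using inc by auto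
        then show False using mx chD[OF xD z] by force
      qed
      then show "min_by A (children F x) = None" by (simp add: min_by_def)
    qed
  next
    fix x y assume xD: "x \<in> Dd F c" and my: "min_by A (children F x) = Some y"
    have "children F x \<noteq> {}" using my by (auto simp: min_by_def split: if_splits)
    have finCh: "finite (children F x)"
    proof -
      have "children F x \<subseteq> V" using FV by (auto simp: children_def)
      then show ?thesis using finV finite_subset by blast
    qed
    have "y \<in> children F x" using min_by_ne[OF finCh \<open>children F x \<noteq> {}\<close>, of A] my by auto
    then have xyF: "(x, y) \<in> F" by (simp add: children_def)
    have yD: "y \<in> Dd F c" using chD[OF xD xyF] .
    have xy: "A x < A y" using inc xyF by auto
    have "\<forall>z\<in>Dd F c. \<not> (A x < A z \<and> A z < A y)"
    proof (intro ballI notI)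
      fix z assume zD: "z \<in> Dd F c" and h: "A x < A z \<and> A z < A y"
      obtain z' where z': "(x, z') \<in> F" "(z', z) \<in> F\<^sup>*" using step1[OF xD zD] h by blast
      have "z' = y" using sv xD z'(1) xyF by blast
      then show False using rt_le[OF inc z'(2)] h by auto
    qed
    then show "consec A (Dd F c) x y" using xD yD xy unfolding consec_def by auto
  qed
  have "\<forall>y\<in>Dd F c. A c \<le> A y" using rt_le[OF inc] inD by blast
  then show ?thesis using g nx by blast
qed

lemma has_parent_sv:
  assumes fk: "fok V A F" and uv: "(u, v) \<in> F" and "(v, z) \<in> F" "(v, z') \<in> F"
  shows "z = z'"
proof -
  have inc: "\<forall>(u, v)\<in>F. A u < A v" and F3: "\<forall>v x y z. x \<in> nbF F v \<longrightarrow> y \<in> nbF F v \<longrightarrow> z \<in> nbF F v \<longrightarrow> x = y \<or> x = z \<or> y = z"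
    using fk unfolding fok_def by auto
  have "u \<in> nbF F v" "z \<in> nbF F v" "z' \<in> nbF F v" using assms by (auto simp: nbF_def)
  moreover have "A u < A v" "A v < A z" "A v < A z'" using inc uv assms(3,4) by blast+
  then have "u \<noteq> z" "u \<noteq> z'" by auto
  ultimately show ?thesis using F3 by blast
qed

lemma parent_exists:
  assumes "(a, y) \<in> F\<^sup>*" "(r, a) \<in> F"
  shows "\<exists>u. (u, y) \<in> F"
  using assms by (metis rtranclE)

lemma root_eq:
  assumes fk: "fok V A F" and r: "\<forall>u. (u, r) \<notin> F" and r': "\<forall>u. (u, r') \<notin> F"
    and x1: "x \<in> Dd F r" and x2: "x \<in> Dd F r'"
  shows "r = r'"
proof -
  have F2: "\<forall>u u' v. (u, v) \<in> F \<longrightarrow> (u', v) \<in> F \<longrightarrow> u = u'" using fk unfolding fok_def by auto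
  have "(r, r') \<in> F\<^sup>* \<or> (r', r) \<in> F\<^sup>*"
    using bconf[OF F2, of r x r'] x1 x2 by (simp add: Dd_def)
  then show ?thesis using r r' by (metis rtranclE)
qed

lemma vcase:
  assumes fk: "fok V A F" and rV: "r \<in> V" and r: "\<forall>u. (u, r) \<notin> F"
    and ch: "children F r = {a, b}" and ab: "a \<noteq> b"
  shows "good A (F \<union> merge_arcs A (\<lambda>v. min_by A (children F v)) (\<lambda>v. min_by A (children F v)) a b) (Dd F a \<union> Dd F b)
       \<and> merge_arcs A (\<lambda>v. min_by A (children F v)) (\<lambda>v. min_by A (children F v)) a b \<subseteq> incarcs A (Dd F a \<union> Dd F b)
       \<and> Dd F r = insert r (Dd F a \<union> Dd F b)
       \<and> (\<forall>y\<in>Dd F a. A a \<le> A y) \<and> (\<forall>y\<in>Dd F b. A b \<le> A y)"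
proof -
  have finV: "finite V" and inj: "inj_on A V" and FV: "F \<subseteq> V \<times> V" and inc: "\<forall>(u, v)\<in>F. A u < A v"
    and F2: "\<forall>u u' v. (u, v) \<in> F \<longrightarrow> (u', v) \<in> F \<longrightarrow> u = u'"
    using fk unfolding fok_def by auto
  have ra: "(r, a) \<in> F" and rb: "(r, b) \<in> F" using ch by (auto simp: children_def)
  have aV: "a \<in> V" and bV: "b \<in> V" using ra rb FV by auto
  have sv: "\<forall>y\<in>Dd F c. \<forall>z z'. (y, z) \<in> F \<longrightarrow> (y, z') \<in> F \<longrightarrow> z = z'" if rc: "(r, c) \<in> F" for c
  proof (intro ballI allI impI)
    fix y z z' assume "y \<in> Dd F c" "(y, z) \<in> F" "(y, z') \<in> F"
    then obtain u where "(u, y) \<in> F" using parent_exists[OF _ rc] by (auto simp: Dd_def)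
    then show "z = z'" using has_parent_sv[OF fk] \<open>(y, z) \<in> F\<close> \<open>(y, z') \<in> F\<close> by blast
  qed
  have ca: "good A F (Dd F a) \<and> nx_ok A (\<lambda>v. min_by A (children F v)) (Dd F a) \<and> (\<forall>y\<in>Dd F a. A a \<le> A y)"
    using chain_lemma[OF fk aV sv[OF ra]] .
  have cb: "good A F (Dd F b) \<and> nx_ok A (\<lambda>v. min_by A (children F v)) (Dd F b) \<and> (\<forall>y\<in>Dd F b. A b \<le> A y)"
    using chain_lemma[OF fk bV sv[OF rb]] .
  have disj: "Dd F a \<inter> Dd F b = {}"
  proof (rule ccontr)
    assume "Dd F a \<inter> Dd F b \<noteq> {}"
    then obtain x where "(a, x) \<in> F\<^sup>*" "(b, x) \<in> F\<^sup>*" by (auto simp: Dd_def)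
    then have "(a, b) \<in> F\<^sup>* \<or> (b, a) \<in> F\<^sup>*" using bconf[OF F2] by blast
    then show False
    proof
      assume "(a, b) \<in> F\<^sup>*"
      then obtain w where "(a, w) \<in> F\<^sup>*" "(w, b) \<in> F" using ab by (metis rtranclE)
      then have "w = r" using F2 rb by blast
      then show False using rt_le[OF inc \<open>(a, w) \<in> F\<^sup>*\<close>] inc ra by auto
    next
      assume "(b, a) \<in> F\<^sup>*"
      then obtain w where "(b, w) \<in> F\<^sup>*" "(w, a) \<in> F" using ab by (metis rtranclE)
      then have "w = r" using F2 ra by blast
      then show False using rt_le[OF inc \<open>(b, w) \<in> F\<^sup>*\<close>] inc rb by auto
    qed
  qed
  have DaV: "Dd F a \<subseteq> V" and DbV: "Dd F b \<subseteq> V" using Dd_sub[OF FV aV] Dd_sub[OF FV bV] .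
  have mm: "good A (F \<union> merge_arcs A (\<lambda>v. min_by A (children F v)) (\<lambda>v. min_by A (children F v)) a b) (Dd F a \<union> Dd F b)
       \<and> merge_arcs A (\<lambda>v. min_by A (children F v)) (\<lambda>v. min_by A (children F v)) a b \<subseteq> incarcs A (Dd F a \<union> Dd F b)"
    apply (rule merge_main)
    using finV DaV DbV finite_subset apply blast
    using finV DaV DbV finite_subset apply blast
    using disj apply blast
    using inj DaV DbV inj_on_subset apply (metis Un_subset_iff)
    apply (simp add: Dd_def)
    using ca apply blast
    apply (simp add: Dd_def)
    using cb apply blast
    using ca apply blast
    using cb apply blast
    using ca apply blast
    using cb apply blast
    done
  have "Dd F r = insert r (Dd F a \<union> Dd F b)"
  proof
    show "Dd F r \<subseteq> insert r (Dd F a \<union> Dd F b)"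
    proof
      fix y assume "y \<in> Dd F r"
      then have "(r, y) \<in> F\<^sup>*" by (simp add: Dd_def)
      then show "y \<in> insert r (Dd F a \<union> Dd F b)"
      proof (cases rule: converse_rtranclE)
        case base then show ?thesis by simp
      next
        case (step z)
        then have "z \<in> {a, b}" using ch by (auto simp: children_def)
        then show ?thesis using step by (auto simp: Dd_def)
      qed
    qed
  next
    show "insert r (Dd F a \<union> Dd F b) \<subseteq> Dd F r"
      using ra rb by (auto simp: Dd_def intro: converse_rtrancl_into_rtrancl)
  qed
  then show ?thesis using mm ca cb by blast
qed

abbreviation nxF where "nxF A F \<equiv> (\<lambda>v. min_by A (children F v))"

lemma mem_M:
  assumes fk: "fok V A F"
    and xy: "(x, y) \<in> \<Union> {merge_arcs A (nxF A F) (nxF A F) a b | r a b. is_root V F r \<and> children F r = {a, b} \<and> a \<noteq> b}"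
  shows "\<exists>r. r \<in> V \<and> (\<forall>u. (u, r) \<notin> F) \<and> x \<in> Dd F r \<and> y \<in> Dd F r \<and> A x < A y"
proof -
  from xy obtain mm where mm: "mm \<in> {merge_arcs A (nxF A F) (nxF A F) a b | r a b. is_root V F r \<and> children F r = {a, b} \<and> a \<noteq> b}"
    and xym: "(x, y) \<in> mm" by (rule UnionE)
  from mm obtain r a b where r: "is_root V F r" "children F r = {a, b}" "a \<noteq> b"
    and mmd: "mm = merge_arcs A (nxF A F) (nxF A F) a b" by blast
  have m: "(x, y) \<in> merge_arcs A (nxF A F) (nxF A F) a b" using xym mmd by simp
  have rV: "r \<in> V" and nr: "\<forall>u. (u, r) \<notin> F" using r(1) unfolding is_root_def by auto
  note vc = vcase[OF fk rV nr r(2) r(3)]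
  then have "(x, y) \<in> incarcs A (Dd F a \<union> Dd F b)" using m by blast
  then have "x \<in> Dd F r \<and> y \<in> Dd F r \<and> A x < A y" using vc unfolding incarcs_def by auto
  then show ?thesis using rV nr by blast
qed

lemma H_inc:
  assumes fk: "fok V A F"
  shows "\<forall>(x, y)\<in>merge_subtrees V A F. A x < A y"
proof
  fix p assume p: "p \<in> merge_subtrees V A F"
  obtain x y where pxy: "p = (x, y)" by (cases p)
  have inc: "\<forall>(u, v)\<in>F. A u < A v" using fk unfolding fok_def by auto
  show "case p of (x, y) \<Rightarrow> A x < A y"
  proof (cases "(x, y) \<in> F")
    case True then show ?thesis using inc pxy by auto
  next
    case False
    have "(x, y) \<in> F \<union> \<Union> {merge_arcs A (nxF A F) (nxF A F) a b | r a b. is_root V F r \<and> children F r = {a, b} \<and> a \<noteq> b}"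
      using p pxy unfolding merge_subtrees_def by simp
    then have "(x, y) \<in> \<Union> {merge_arcs A (nxF A F) (nxF A F) a b | r a b. is_root V F r \<and> children F r = {a, b} \<and> a \<noteq> b}"
      using False by (simp only: Un_iff simp_thms)
    from mem_M[OF fk this] show ?thesis using pxy by auto
  qed
qed

lemma H_closed:
  assumes fk: "fok V A F" and rV: "r \<in> V" and nr: "\<forall>u. (u, r) \<notin> F"
    and x: "x \<in> Dd F r" and e: "(x, y) \<in> merge_subtrees V A F \<or> (y, x) \<in> merge_subtrees V A F"
  shows "y \<in> Dd F r"
proof -
  have F2: "\<forall>u u' v. (u, v) \<in> F \<longrightarrow> (u', v) \<in> F \<longrightarrow> u = u'" using fk unfolding fok_def by auto
  let ?M = "\<Union> {merge_arcs A (nxF A F) (nxF A F) a b | r a b. is_root V F r \<and> children F r = {a, b} \<and> a \<noteq> b}"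
  have H: "merge_subtrees V A F = F \<union> ?M" unfolding merge_subtrees_def by simp
  have rx: "(r, x) \<in> F\<^sup>*" using x by (simp add: Dd_def)
  from e[unfolded H Un_iff] show ?thesis
  proof (elim disjE)
    assume 1: "(x, y) \<in> F" then show ?thesis using rx by (simp add: Dd_def rtrancl.rtrancl_into_rtrancl)
  next
    assume 2: "(y, x) \<in> F"
    have "x \<noteq> r" using 2 nr by auto
    then obtain w where "(r, w) \<in> F\<^sup>*" "(w, x) \<in> F" using rx by (metis rtranclE)
    then have "w = y" using F2 2 by blast
    then show ?thesis using \<open>(r, w) \<in> F\<^sup>*\<close> by (simp add: Dd_def)
  next
    assume 3: "(x, y) \<in> ?M"
    then obtain r' where r': "r' \<in> V" "\<forall>u. (u, r') \<notin> F" "x \<in> Dd F r'" "y \<in> Dd F r'"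
      using mem_M[OF fk 3] by blast
    then have "r = r'" using root_eq[OF fk nr r'(2) x] by blast
    then show ?thesis using r' by simp
  next
    assume 4: "(y, x) \<in> ?M"
    then obtain r' where r': "r' \<in> V" "\<forall>u. (u, r') \<notin> F" "y \<in> Dd F r'" "x \<in> Dd F r'"
      using mem_M[OF fk 4] by blast
    then have "r = r'" using root_eq[OF fk nr r'(2) x] by blast
    then show ?thesis using r' by simp
  qed
qed

lemma consec_subset: "consec A S x y \<Longrightarrow> x \<in> T \<Longrightarrow> y \<in> T \<Longrightarrow> T \<subseteq> S \<Longrightarrow> consec A T x y"
  unfolding consec_def by blast

lemma H_good:
  assumes fk: "fok V A F" and rV: "r \<in> V" and nr: "\<forall>u. (u, r) \<notin> F"
  shows "good A (merge_subtrees V A F) (Dd F r)"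
proof -
  have finV: "finite V" and inj: "inj_on A V" and FV: "F \<subseteq> V \<times> V" and inc: "\<forall>(u, v)\<in>F. A u < A v"
    and F3: "\<forall>v x y z. x \<in> nbF F v \<longrightarrow> y \<in> nbF F v \<longrightarrow> z \<in> nbF F v \<longrightarrow> x = y \<or> x = z \<or> y = z"
    using fk unfolding fok_def by auto
  have FH: "F \<subseteq> merge_subtrees V A F" unfolding merge_subtrees_def by blast
  have eqv: "\<And>x y. x \<in> V \<Longrightarrow> y \<in> V \<Longrightarrow> A x = A y \<Longrightarrow> x = y" using inj by (meson inj_onD)
  have DrV: "Dd F r \<subseteq> V" using Dd_sub[OF FV rV] .
  show ?thesis
  proof (cases "\<forall>y\<in>Dd F r. \<forall>z z'. (y, z) \<in> F \<longrightarrow> (y, z') \<in> F \<longrightarrow> z = z'")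
    case True
    then have "good A F (Dd F r)" using chain_lemma[OF fk rV] by blast
    then show ?thesis using good_mono FH by blast
  next
    case False
    then obtain y z z' where y: "y \<in> Dd F r" "(y, z) \<in> F" "(y, z') \<in> F" "z \<noteq> z'" by blast
    have "y = r"
    proof (rule ccontr)
      assume "y \<noteq> r"
      then obtain u where "(u, y) \<in> F" using y(1) by (metis Dd_def mem_Collect_eq rtranclE)
      then show False using has_parent_sv[OF fk _ y(2) y(3)] y(4) by blast
    qed
    then have rz: "(r, z) \<in> F" "(r, z') \<in> F" using y by auto
    have ch: "children F r = {z, z'}"
    proof
      show "children F r \<subseteq> {z, z'}"
      proof
        fix w assume "w \<in> children F r"
        then have "w \<in> nbF F r" by (simp add: children_def nbF_def)
        moreover have "z \<in> nbF F r" "z' \<in> nbF F r" using rz by (auto simp: nbF_def)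
        ultimately show "w \<in> {z, z'}" using F3 y(4) by blast
      qed
    next
      show "{z, z'} \<subseteq> children F r" using rz by (auto simp: children_def)
    qed
    let ?M = "merge_arcs A (nxF A F) (nxF A F) z z'"
    have root: "is_root V F r" using rV nr by (simp add: is_root_def)
    have "?M \<in> {merge_arcs A (nxF A F) (nxF A F) a b | r a b. is_root V F r \<and> children F r = {a, b} \<and> a \<noteq> b}"
      using root ch y(4) by blast
    then have MH: "?M \<subseteq> merge_subtrees V A F"
      unfolding merge_subtrees_def by (intro Un_upper2[THEN subset_trans[rotated]] Union_upper)
    note vc = vcase[OF fk rV nr ch y(4)]
    have gU: "good A (F \<union> ?M) (Dd F z \<union> Dd F z')" and Dr: "Dd F r = insert r (Dd F z \<union> Dd F z')"
      and mz: "\<forall>w\<in>Dd F z. A z \<le> A w" and mz': "\<forall>w\<in>Dd F z'. A z' \<le> A w"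
      using vc by blast+
    have rmin: "\<forall>w\<in>Dd F r. A r \<le> A w" using rt_le[OF inc] by (auto simp: Dd_def)
    show ?thesis
      unfolding good_def
    proof (intro allI impI)
      fix x w assume cs: "consec A (Dd F r) x w"
      then have xD: "x \<in> Dd F r" and wD: "w \<in> Dd F r" and xw: "A x < A w"
        and nb: "\<forall>v\<in>Dd F r. \<not> (A x < A v \<and> A v < A w)" unfolding consec_def by auto
      have "A r \<le> A x" using rmin xD by blast
      then have wr: "w \<noteq> r" using xw by auto
      then have wU: "w \<in> Dd F z \<union> Dd F z'" using wD Dr by auto
      show "(x, w) \<in> merge_subtrees V A F"
      proof (cases "x = r")
        case True
        have zD: "z \<in> Dd F r" "z' \<in> Dd F r" using Dr by (auto simp: Dd_def)
        have Arz: "A r < A z" "A r < A z'" using inc rz by blast+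
        have "w = z \<or> w = z'"
        proof (cases "w \<in> Dd F z")
          case True
          have "A z \<le> A w" using mz True by blast
          moreover have "\<not> A z < A w" using nb zD(1) Arz(1) \<open>x = r\<close> by blast
          ultimately have "A z = A w" by linarith
          then show ?thesis using eqv zD(1) wD DrV by blast
        next
          case False
          then have wz': "w \<in> Dd F z'" using wU by blast
          have "A z' \<le> A w" using mz' wz' by blast
          moreover have "\<not> A z' < A w" using nb zD(2) Arz(2) \<open>x = r\<close> by blast
          ultimately have "A z' = A w" by linarith
          then show ?thesis using eqv zD(2) wD DrV by blast
        qed
        then show ?thesis using rz FH True by blast
      next
        case False
        then have xU: "x \<in> Dd F z \<union> Dd F z'" using xD Dr by auto
        have "consec A (Dd F z \<union> Dd F z') x w" using consec_subset[OF cs xU wU] Dr by blast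
        then have "(x, w) \<in> F \<union> ?M" using gU unfolding good_def by blast
        then show ?thesis using FH MH by blast
      qed
    qed
  qed
qed

lemma comp_is_D:
  assumes fk: "fok V A F" and v0: "v0 \<in> V"
  shows "\<exists>r. r \<in> V \<and> (\<forall>u. (u, r) \<notin> F) \<and> component_of V (merge_subtrees V A F) v0 = Dd F r"
proof -
  let ?H = "merge_subtrees V A F"
  let ?R = "?H \<union> ?H\<inverse>"
  let ?C = "component_of V ?H v0"
  have finV: "finite V" and FV: "F \<subseteq> V \<times> V" and inc: "\<forall>(u, v)\<in>F. A u < A v"
    using fk unfolding fok_def by auto
  have FH: "F \<subseteq> ?H" unfolding merge_subtrees_def by blast
  have Cdef: "\<And>u. u \<in> ?C \<longleftrightarrow> u \<in> V \<and> (v0, u) \<in> ?R\<^sup>*" by (simp add: component_of_def)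
  have "?C \<subseteq> V" by (auto simp: component_of_def)
  then have finC: "finite ?C" using finV finite_subset by blast
  have neC: "?C \<noteq> {}" using v0 Cdef by blast
  define r where "r = arg_min_on A ?C"
  have rC: "r \<in> ?C" and rmin: "\<not> (\<exists>z\<in>?C. A z < A r)"
    using arg_min_if_finite[OF finC neC, of A] unfolding r_def by auto
  have rV: "r \<in> V" and v0r: "(v0, r) \<in> ?R\<^sup>*" using rC Cdef by auto
  have nr: "\<forall>u. (u, r) \<notin> F"
  proof (intro allI notI)
    fix u assume ur: "(u, r) \<in> F"
    then have uV: "u \<in> V" using FV by auto
    have "(r, u) \<in> ?R" using ur FH by blast
    then have "(v0, u) \<in> ?R\<^sup>*" using v0r by (meson rtrancl.rtrancl_into_rtrancl)
    then have "u \<in> ?C" using uV Cdef by blast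
    moreover have "A u < A r" using inc ur by blast
    ultimately show False using rmin by blast
  qed
  have "?C = Dd F r"
  proof
    show "Dd F r \<subseteq> ?C"
    proof
      fix y assume yD: "y \<in> Dd F r"
      have yV: "y \<in> V" using Dd_sub[OF FV rV] yD by blast
      have "(r, y) \<in> F\<^sup>*" using yD by (simp add: Dd_def)
      moreover have "F\<^sup>* \<subseteq> ?R\<^sup>*" using FH by (intro rtrancl_mono) blast
      ultimately have "(r, y) \<in> ?R\<^sup>*" by blast
      then have "(v0, y) \<in> ?R\<^sup>*" using v0r by (meson rtrancl_trans)
      then show "y \<in> ?C" using yV Cdef by blast
    qed
  next
    show "?C \<subseteq> Dd F r"
    proof
      fix u assume "u \<in> ?C"
      then have v0u: "(v0, u) \<in> ?R\<^sup>*" using Cdef by blast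
      have symR: "?R\<inverse> = ?R" by auto
      have "(r, v0) \<in> (?R\<inverse>)\<^sup>*" using v0r by (simp add: rtrancl_converseI)
      then have "(r, v0) \<in> ?R\<^sup>*" using symR by simp
      then have "(r, u) \<in> ?R\<^sup>*" using v0u by (meson rtrancl_trans)
      then show "u \<in> Dd F r"
      proof (induction rule: rtrancl_induct)
        case base then show ?case by (simp add: Dd_def)
      next
        case (step a b)
        then show ?case using H_closed[OF fk rV nr, of a b] by blast
      qed
    qed
  qed
  then show ?thesis using rV nr by blast
qed

lemma mod_inj:
  assumes "a \<in> {1..n}" "b \<in> {1..(n::nat)}" "a mod n = b mod n"
  shows "a = b"
proof -
  have h: "x mod n = (if x = n then 0 else x)" if "x \<in> {1..n}" for x
    using that by auto
  show ?thesis using h[OF assms(1)] h[OF assms(2)] assms by (auto split: if_splits)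
qed

lemma mod_suc_cancel:
  assumes "(x + 1) mod n = (y + 1) mod (n::nat)" "n \<ge> 1"
  shows "x mod n = y mod n"
proof -
  have ex: "x mod n = ((x + 1) mod n + (n - 1)) mod n" for x
  proof -
    have "x mod n = (x + n) mod n" by simp
    also have "x + n = (x + 1) + (n - 1)" using assms(2) by simp
    also have "((x + 1) + (n - 1)) mod n = ((x + 1) mod n + (n - 1)) mod n" by (simp add: mod_add_left_eq)
    finally show ?thesis .
  qed
  show ?thesis using ex[of x] ex[of y] assms(1) by simp
qed

definition Nb :: "nat \<Rightarrow> nat \<Rightarrow> nat set" where
  "Nb n v = {w \<in> {1..n}. w mod n = (v + 1) mod n \<or> (w + 1) mod n = v mod n}"

lemma N3:
  assumes "x \<in> Nb n v" "y \<in> Nb n v" "z \<in> Nb n v"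
  shows "x = y \<or> x = z \<or> y = z"
proof -
  have n1: "n \<ge> 1" using assms(1) by (auto simp: Nb_def)
  have c1: "a = b" if "a \<in> Nb n v" "b \<in> Nb n v" "a mod n = (v + 1) mod n" "b mod n = (v + 1) mod n" for a b
    using that mod_inj[of a n b] by (auto simp: Nb_def)
  have c2: "a = b" if "a \<in> Nb n v" "b \<in> Nb n v" "(a + 1) mod n = v mod n" "(b + 1) mod n = v mod n" for a b
    using that mod_inj[of a n b] mod_suc_cancel[of a n b] n1 by (auto simp: Nb_def)
  show ?thesis using assms c1 c2 unfolding Nb_def by blast
qed

lemma G_sub: "reach_one_graph n A \<subseteq> {1..n} \<times> {1..n}"
  unfolding reach_one_graph_def by auto

lemma G_inc: "\<forall>(u, v)\<in>reach_one_graph n A. A u < A v"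
  unfolding reach_one_graph_def by auto

lemma G_nb: "(v, w) \<in> reach_one_graph n A \<or> (w, v) \<in> reach_one_graph n A \<Longrightarrow> w \<in> Nb n v"
  unfolding reach_one_graph_def Nb_def by auto

definition dinv :: "(nat \<times> nat) set \<Rightarrow> dfs_state \<Rightarrow> bool" where
  "dinv G s = (case s of (vis, st, todo, T) \<Rightarrow> T \<subseteq> G \<and> (\<forall>(u, v)\<in>T. v \<in> vis) \<and>
      (\<forall>u u' v. (u, v) \<in> T \<longrightarrow> (u', v) \<in> T \<longrightarrow> u = u'))"

lemma dinv_step:
  assumes finG: "finite G" and inv: "dinv G s"
  shows "dinv G (dfs_step A G s)"
proof -
  obtain vis st todo T where s: "s = (vis, st, todo, T)" by (cases s) auto
  have i: "T \<subseteq> G" "\<forall>(u, v)\<in>T. v \<in> vis" "\<forall>u u' v. (u, v) \<in> T \<longrightarrow> (u', v) \<in> T \<longrightarrow> u = u'"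
    using inv s unfolding dinv_def by auto
  show ?thesis
  proof (cases st)
    case Nil
    show ?thesis
    proof (cases todo)
      case Nil
      then show ?thesis using s \<open>st = []\<close> i unfolding dfs_step_def dinv_def by auto
    next
      case (Cons u us)
      then show ?thesis using s \<open>st = []\<close> i unfolding dfs_step_def dinv_def by auto
    qed
  next
    case (Cons v rest)
    define U where "U = {w. (v, w) \<in> G \<and> w \<notin> vis}"
    show ?thesis
    proof (cases "U = {}")
      case True
      then have "dfs_step A G s = (vis, rest, todo, T)"
        using s Cons unfolding dfs_step_def U_def by (simp add: Let_def)
      then show ?thesis using i unfolding dinv_def by auto
    next
      case False
      define w where "w = arg_min A (\<lambda>x. x \<in> U)"
      have finU: "finite U"
      proof -
        have "U \<subseteq> snd ` G" unfolding U_def by force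
        then show ?thesis using finG finite_subset by blast
      qed
      have wU: "w \<in> U" using arg_min_if_finite(1)[OF finU False, of A] unfolding w_def arg_min_on_def .
      have st: "dfs_step A G s = (insert w vis, w # st, todo, insert (v, w) T)"
        using s Cons False unfolding dfs_step_def U_def w_def by (simp add: Let_def)
      have "(v, w) \<in> G" "w \<notin> vis" using wU unfolding U_def by auto
      then show ?thesis unfolding st dinv_def using i by auto
    qed
  qed
qed

lemma dfs_props:
  assumes finG: "finite G"
  shows "dfs_forest A G vl \<subseteq> G \<and>
         (\<forall>u u' v. (u, v) \<in> dfs_forest A G vl \<longrightarrow> (u', v) \<in> dfs_forest A G vl \<longrightarrow> u = u')"
proof (cases "while_option (\<lambda>(vis, st, todo, T). st \<noteq> [] \<or> todo \<noteq> []) (dfs_step A G) ({}, [], vl, {})")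
  case None
  then show ?thesis unfolding dfs_forest_def by simp
next
  case (Some t)
  obtain vis st todo T where t: "t = (vis, st, todo, T)" by (cases t) auto
  have "dinv G t"
    using while_option_rule[where P = "dinv G", OF _ Some] dinv_step[OF finG]
    by (auto simp: dinv_def)
  moreover have "dfs_forest A G vl = T" unfolding dfs_forest_def using Some t by simp
  ultimately show ?thesis using t unfolding dinv_def by auto
qed

lemma fok_F:
  assumes inj: "inj_on A {1..n}"
  shows "fok {1..n} A (dfs_forest A (reach_one_graph n A) vl)"
proof -
  let ?G = "reach_one_graph n A"
  let ?F = "dfs_forest A ?G vl"
  have finG: "finite ?G" using G_sub[of n A] finite_subset by blast
  have FG: "?F \<subseteq> ?G" and F2: "\<forall>u u' v. (u, v) \<in> ?F \<longrightarrow> (u', v) \<in> ?F \<longrightarrow> u = u'"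
    using dfs_props[OF finG] by blast+
  have F3: "\<forall>v x y z. x \<in> nbF ?F v \<longrightarrow> y \<in> nbF ?F v \<longrightarrow> z \<in> nbF ?F v \<longrightarrow> x = y \<or> x = z \<or> y = z"
  proof (intro allI impI)
    fix v x y z assume "x \<in> nbF ?F v" "y \<in> nbF ?F v" "z \<in> nbF ?F v"
    then have "x \<in> Nb n v" "y \<in> Nb n v" "z \<in> Nb n v"
      using G_nb[of v _ n A] FG unfolding nbF_def by blast+
    then show "x = y \<or> x = z \<or> y = z" by (rule N3)
  qed
  have "\<forall>(u, v)\<in>?F. A u < A v" using G_inc[of n A] FG by blast
  moreover have "?F \<subseteq> {1..n} \<times> {1..n}" using G_sub[of n A] FG by blast
  ultimately show ?thesis using F2 F3 inj unfolding fok_def by blast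
qed

lemma zip_uniq:
  assumes "distinct xs" "(x, y) \<in> set (zip xs (tl xs))" "(x, z) \<in> set (zip xs (tl xs))"
  shows "y = z"
proof -
  obtain i where i: "xs ! i = x" "tl xs ! i = y" "i < length xs" "i < length (tl xs)"
    using assms(2) by (auto simp: in_set_zip)
  obtain j where j: "xs ! j = x" "tl xs ! j = z" "j < length xs" "j < length (tl xs)"
    using assms(3) by (auto simp: in_set_zip)
  have "i = j" using i j assms(1) nth_eq_iff_index_eq by metis
  then show ?thesis using i j by simp
qed

lemma graph_H_eq:
  assumes FV: "F \<subseteq> V \<times> V"
  shows "graph_H V A F = merge_subtrees V A F"
proof (cases "\<forall>C \<in> components V F. is_directed_path_comp F C")
  case True
  have none: "\<not> (is_root V F r \<and> children F r = {a, b} \<and> a \<noteq> b)" for r a b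
  proof
    assume h: "is_root V F r \<and> children F r = {a, b} \<and> a \<noteq> b"
    then have rV: "r \<in> V" and ra: "(r, a) \<in> F" and rb: "(r, b) \<in> F"
      by (auto simp: is_root_def children_def)
    let ?C = "component_of V F r"
    have "?C \<in> components V F" using rV by (simp add: components_def)
    then obtain xs where xs: "distinct xs" "{(u, v) \<in> F. u \<in> ?C \<and> v \<in> ?C} = set (zip xs (tl xs))"
      using True unfolding is_directed_path_comp_def by blast
    have "r \<in> ?C" "a \<in> ?C" "b \<in> ?C" using rV ra rb FV by (auto simp: component_of_def)
    then have "(r, a) \<in> set (zip xs (tl xs))" "(r, b) \<in> set (zip xs (tl xs))"
      using xs(2) ra rb by blast+
    then have "a = b" using zip_uniq xs(1) by metis
    then show False using h by simp
  qed
  have "merge_subtrees V A F = F" unfolding merge_subtrees_def using none by blast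
  then show ?thesis using True unfolding graph_H_def by simp
next
  case False
  show ?thesis unfolding graph_H_def by (rule if_not_P[OF False])
qed

lemma comp_eq:
  assumes "w \<in> component_of V E x" "w \<in> component_of V E y"
  shows "component_of V E x = component_of V E y"
proof -
  let ?R = "E \<union> E\<inverse>"
  have symR: "?R\<inverse> = ?R" by auto
  have xw: "(x, w) \<in> ?R\<^sup>*" and yw: "(y, w) \<in> ?R\<^sup>*" using assms by (auto simp: component_of_def)
  have "(w, y) \<in> (?R\<inverse>)\<^sup>*" using yw by (simp add: rtrancl_converseI)
  then have "(w, y) \<in> ?R\<^sup>*" using symR by simp
  then have xy: "(x, y) \<in> ?R\<^sup>*" using xw by (meson rtrancl_trans)
  have "(y, x) \<in> (?R\<inverse>)\<^sup>*" using xy by (simp add: rtrancl_converseI)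
  then have yx: "(y, x) \<in> ?R\<^sup>*" using symR by simp
  show ?thesis unfolding component_of_def using xy yx by (meson rtrancl_trans)
qed


theorem theorem10:
  fixes n :: nat and A :: "nat \<Rightarrow> real" and vl :: "nat list" and H1 H2 :: "nat set"
  assumes distinct_vals: "inj_on A {1..n}"
    and visiting_list: "set vl = {1..n}"
    and H1: "H1 \<in> components {1..n} (graph_H {1..n} A (dfs_forest A (reach_one_graph n A) vl))"
    and H2: "H2 \<in> components {1..n} (graph_H {1..n} A (dfs_forest A (reach_one_graph n A) vl))"
    and distinct_comps: "H1 \<noteq> H2"
  shows "has_ham_path
           (component_merge A (graph_H {1..n} A (dfs_forest A (reach_one_graph n A) vl)) H1 H2)
           (H1 \<union> H2)"
proof -
  let ?V = "{1..n} :: nat set"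
  let ?F = "dfs_forest A (reach_one_graph n A) vl"
  define H where "H = graph_H ?V A ?F"
  have fk: "fok ?V A ?F" using fok_F[OF distinct_vals] .
  have FV: "?F \<subseteq> ?V \<times> ?V" using fk unfolding fok_def by blast
  have HM: "H = merge_subtrees ?V A ?F" unfolding H_def by (rule graph_H_eq[OF FV])
  have Hinc: "\<forall>(x, y)\<in>H. A x < A y" unfolding HM by (rule H_inc[OF fk])
  obtain v1 where v1: "v1 \<in> ?V" "H1 = component_of ?V H v1" using H1 unfolding H_def components_def by blast
  obtain v2 where v2: "v2 \<in> ?V" "H2 = component_of ?V H v2" using H2 unfolding H_def components_def by blast
  obtain r1 where r1: "r1 \<in> ?V" "\<forall>u. (u, r1) \<notin> ?F" "H1 = Dd ?F r1"
    using comp_is_D[OF fk v1(1)] v1(2) HM by metis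
  obtain r2 where r2: "r2 \<in> ?V" "\<forall>u. (u, r2) \<notin> ?F" "H2 = Dd ?F r2"
    using comp_is_D[OF fk v2(1)] v2(2) HM by metis
  have g1: "good A H H1" using H_good[OF fk r1(1) r1(2)] r1(3) HM by simp
  have g2: "good A H H2" using H_good[OF fk r2(1) r2(2)] r2(3) HM by simp
  have s1: "H1 \<subseteq> ?V" and s2: "H2 \<subseteq> ?V" using v1 v2 by (auto simp: component_of_def)
  have f1: "finite H1" and f2: "finite H2" using s1 s2 finite_subset by blast+
  have disj: "H1 \<inter> H2 = {}"
  proof (rule ccontr)
    assume "H1 \<inter> H2 \<noteq> {}"
    then obtain w where "w \<in> H1" "w \<in> H2" by blast
    then show False using comp_eq[of w ?V H v1 v2] v1 v2 distinct_comps by simp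
  qed
  have inj12: "inj_on A (H1 \<union> H2)" using distinct_vals s1 s2 inj_on_subset by (metis Un_subset_iff)
  have ne1: "H1 \<noteq> {}" and ne2: "H2 \<noteq> {}" using v1 v2 by (auto simp: component_of_def)
  have m1: "arg_min A (\<lambda>x. x \<in> H1) \<in> H1" "\<forall>x\<in>H1. A (arg_min A (\<lambda>x. x \<in> H1)) \<le> A x"
    using arg_min_if_finite[OF f1 ne1, of A] unfolding arg_min_on_def by (auto simp: not_less)
  have m2: "arg_min A (\<lambda>x. x \<in> H2) \<in> H2" "\<forall>x\<in>H2. A (arg_min A (\<lambda>x. x \<in> H2)) \<le> A x"
    using arg_min_if_finite[OF f2 ne2, of A] unfolding arg_min_on_def by (auto simp: not_less)
  have i1: "\<forall>(x, y)\<in>H. x \<in> H1 \<longrightarrow> y \<in> H1 \<longrightarrow> A x < A y" using Hinc by blast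
  have i2: "\<forall>(x, y)\<in>H. x \<in> H2 \<longrightarrow> y \<in> H2 \<longrightarrow> A x < A y" using Hinc by blast
  have mm: "good A (H \<union> merge_arcs A (\<lambda>v. min_by A {w \<in> H1. (v, w) \<in> H}) (\<lambda>v. min_by A {w \<in> H2. (v, w) \<in> H})
              (arg_min A (\<lambda>x. x \<in> H1)) (arg_min A (\<lambda>x. x \<in> H2))) (H1 \<union> H2)"
    using merge_main[OF f1 f2 disj inj12 m1 m2 nx_from_good[OF f1 g1 i1] nx_from_good[OF f2 g2 i2] g1 g2] by blast
  then have "good A (component_merge A H H1 H2) (H1 \<union> H2)" unfolding component_merge_def .
  then obtain xs where "distinct xs" "set xs = H1 \<union> H2" "set (zip xs (tl xs)) \<subseteq> component_merge A H H1 H2"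
    using ham[of "H1 \<union> H2" A] f1 f2 inj12 by blast
  then show ?thesis unfolding has_ham_path_def H_def by blast
qed

end
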